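(* Let $(X,d^X)$ be a graph with bounded geometry that is roughly isometric to a Cayley graph $(G,S,d^S)$ of a group of polynomial volume growth, via a rough isometry $\phi:X\to G$. Then there exist a group $G'$ with a finite symmetric generating set $S'$, of polynomial volume growth with the same homogeneous dimension as $G$, and an injective rough isometry $\phi':X\to (G',d^{S'})$.
   Context: Graphs are connected, locally finite, without self-loops or multiple edges; $d^X$ is the path-length metric. Bounded geometry: $\deg x\leq\Delta$ for all vertices $x$ and some $\Delta>0$. For a group $G$ with finite symmetric generating set $S$, the Cayley graph has $x\sim y$ iff $x=ys$ for some $s\in S$, with word metric $d^S$. $G$ has polynomial volume growth if $|\{x:d^S(e,x)\leq n\}|\leq Cn^A$ for some $C,A>0$ and all $n\geq1$; the homogeneous dimension is the integer $D$ with $C_1n^D\leq|\{x:d^S(e,x)\leq n\}|\leq C_2n^D$ for all $n\geq 1$. A map $\phi:X\to Y$ of metric spaces is an $(a,b)$-rough isometry ($a\geq1,b\geq0$) if $a^{-1}d^X(x,y)-b\leq d^Y(\phi(x),\phi(y))\leq a\,d^X(x,y)+b$ for all $x,y\in X$ and $d^Y(z,\phi(X))\leq b$ for all $z\in Y$; a rough isometry is an $(a,b)$-rough isometry for some $a,b$. *)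

theory Defs
  imports Complex_Main "HOL-Algebra.Generated_Groups"
begin

definition is_walk :: "('a \<Rightarrow> 'a \<Rightarrow> bool) \<Rightarrow> 'a list \<Rightarrow> bool" where
  "is_walk E p \<longleftrightarrow> p \<noteq> [] \<and> (\<forall>i. Suc i < length p \<longrightarrow> E (p ! i) (p ! Suc i))"

definition graph_dist :: "'a set \<Rightarrow> ('a \<Rightarrow> 'a \<Rightarrow> bool) \<Rightarrow> 'a \<Rightarrow> 'a \<Rightarrow> nat" where
  "graph_dist V E x y = (LEAST n. \<exists>p. is_walk E p \<and> set p \<subseteq> V \<and> hd p = x \<and> last p = y
                                      \<and> length p = Suc n)"

definition conn_graph :: "'a set \<Rightarrow> ('a \<Rightarrow> 'a \<Rightarrow> bool) \<Rightarrow> bool" where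
  "conn_graph V E \<longleftrightarrow>
     (\<forall>x y. E x y \<longrightarrow> x \<in> V \<and> y \<in> V) \<and>
     (\<forall>x y. E x y \<longrightarrow> E y x) \<and>
     (\<forall>x. \<not> E x x) \<and>
     (\<forall>x\<in>V. finite {y. E x y}) \<and>
     (\<forall>x\<in>V. \<forall>y\<in>V. \<exists>p. is_walk E p \<and> set p \<subseteq> V \<and> hd p = x \<and> last p = y)"

definition bounded_geometry :: "'a set \<Rightarrow> ('a \<Rightarrow> 'a \<Rightarrow> bool) \<Rightarrow> bool" where
  "bounded_geometry V E \<longleftrightarrow> (\<exists>\<Delta>::nat. \<Delta> > 0 \<and> (\<forall>x\<in>V. card {y. E x y} \<le> \<Delta>))"

definition fin_sym_gen_set :: "('g, 'm) monoid_scheme \<Rightarrow> 'g set \<Rightarrow> bool" where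
  "fin_sym_gen_set G S \<longleftrightarrow> group G \<and> finite S \<and> S \<subseteq> carrier G \<and>
     (\<forall>s\<in>S. inv\<^bsub>G\<^esub> s \<in> S) \<and> generate G S = carrier G"

text \<open>Word metric: least n such that x = y s_1 ... s_n with s_i in S
  (= path metric of the Cayley graph, x ~ y iff x = y s).\<close>
definition word_dist :: "('g, 'm) monoid_scheme \<Rightarrow> 'g set \<Rightarrow> 'g \<Rightarrow> 'g \<Rightarrow> nat" where
  "word_dist G S x y = (LEAST n. \<exists>ss. length ss = n \<and> set ss \<subseteq> S \<and>
       x = y \<otimes>\<^bsub>G\<^esub> foldr (\<lambda>s a. s \<otimes>\<^bsub>G\<^esub> a) ss \<one>\<^bsub>G\<^esub>)"

definition word_ball :: "('g, 'm) monoid_scheme \<Rightarrow> 'g set \<Rightarrow> nat \<Rightarrow> 'g set" where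
  "word_ball G S n = {x \<in> carrier G. word_dist G S \<one>\<^bsub>G\<^esub> x \<le> n}"

definition poly_growth :: "('g, 'm) monoid_scheme \<Rightarrow> 'g set \<Rightarrow> bool" where
  "poly_growth G S \<longleftrightarrow> (\<exists>C A::real. C > 0 \<and> A > 0 \<and>
     (\<forall>n::nat. n \<ge> 1 \<longrightarrow> real (card (word_ball G S n)) \<le> C * real n powr A))"

definition homogeneous_dim :: "('g, 'm) monoid_scheme \<Rightarrow> 'g set \<Rightarrow> nat \<Rightarrow> bool" where
  "homogeneous_dim G S D \<longleftrightarrow> (\<exists>C1 C2::real. C1 > 0 \<and> C2 > 0 \<and>
     (\<forall>n::nat. n \<ge> 1 \<longrightarrow> C1 * real n ^ D \<le> real (card (word_ball G S n)) \<and>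
                          real (card (word_ball G S n)) \<le> C2 * real n ^ D))"

definition rough_isometry ::
  "'a set \<Rightarrow> ('a \<Rightarrow> 'a \<Rightarrow> real) \<Rightarrow> 'b set \<Rightarrow> ('b \<Rightarrow> 'b \<Rightarrow> real) \<Rightarrow> ('a \<Rightarrow> 'b) \<Rightarrow> real \<Rightarrow> real \<Rightarrow> bool" where
  "rough_isometry X dX Y dY \<phi> a b \<longleftrightarrow> a \<ge> 1 \<and> b \<ge> 0 \<and> \<phi> ` X \<subseteq> Y \<and>
     (\<forall>x\<in>X. \<forall>y\<in>X. dX x y / a - b \<le> dY (\<phi> x) (\<phi> y) \<and> dY (\<phi> x) (\<phi> y) \<le> a * dX x y + b) \<and>
     (\<forall>z\<in>Y. \<exists>x\<in>X. dY z (\<phi> x) \<le> b)"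

definition is_rough_isometry ::
  "'a set \<Rightarrow> ('a \<Rightarrow> 'a \<Rightarrow> real) \<Rightarrow> 'b set \<Rightarrow> ('b \<Rightarrow> 'b \<Rightarrow> real) \<Rightarrow> ('a \<Rightarrow> 'b) \<Rightarrow> bool" where
  "is_rough_isometry X dX Y dY \<phi> \<longleftrightarrow> (\<exists>a b. rough_isometry X dX Y dY \<phi> a b)"

end

theory Submission imports Defs "HOL-Library.Countable_Set" begin

definition wp :: "('g,'m) monoid_scheme \<Rightarrow> 'g list \<Rightarrow> 'g" where
  "wp G ss = foldr (\<lambda>s a. s \<otimes>\<^bsub>G\<^esub> a) ss \<one>\<^bsub>G\<^esub>"

lemma wp_simps[simp]: "wp G [] = \<one>\<^bsub>G\<^esub>" "wp G (s # ss) = s \<otimes>\<^bsub>G\<^esub> wp G ss"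
  by (simp_all add: wp_def)

lemma word_dist_wp: "word_dist G S x y = (LEAST n. \<exists>ss. length ss = n \<and> set ss \<subseteq> S \<and> x = y \<otimes>\<^bsub>G\<^esub> wp G ss)"
  by (simp add: word_dist_def wp_def)

lemma (in group) wp_closed: "set ss \<subseteq> carrier G \<Longrightarrow> wp G ss \<in> carrier G"
  by (induction ss) auto

lemma (in group) wp_append: "set xs \<subseteq> carrier G \<Longrightarrow> set ys \<subseteq> carrier G \<Longrightarrow> wp G (xs @ ys) = wp G xs \<otimes> wp G ys"
  by (induction xs) (auto simp: m_assoc wp_closed)

lemma (in group) generate_words:
  assumes "S \<subseteq> carrier G" "\<forall>s\<in>S. inv s \<in> S" "h \<in> generate G S"
  shows "\<exists>ss. set ss \<subseteq> S \<and> h = wp G ss"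
  using assms(3)
proof induction
  case one then show ?case by (intro exI[of _ "[]"]) simp
next
  case (incl h) then show ?case using assms by (intro exI[of _ "[h]"]) auto
next
  case (inv h) then show ?case using assms by (intro exI[of _ "[inv h]"]) auto
next
  case (eng h1 h2)
  then obtain s1 s2 where "set s1 \<subseteq> S" "h1 = wp G s1" "set s2 \<subseteq> S" "h2 = wp G s2" by blast
  then show ?case using assms(1) by (intro exI[of _ "s1 @ s2"]) (auto simp: wp_append)
qed

lemma wp_generate: "set ss \<subseteq> S \<Longrightarrow> wp G ss \<in> generate G S"
  by (induction ss) (auto intro: generate.intros)

lemma fsg_words:
  assumes "fin_sym_gen_set G S" "g \<in> carrier G"
  shows "\<exists>ss. set ss \<subseteq> S \<and> g = wp G ss"
  using assms group.generate_words[of G S g] unfolding fin_sym_gen_set_def by auto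

lemma fsg_words2:
  assumes "fin_sym_gen_set G S" "x \<in> carrier G" "y \<in> carrier G"
  shows "\<exists>ss. set ss \<subseteq> S \<and> x = y \<otimes>\<^bsub>G\<^esub> wp G ss"
proof -
  interpret group G using assms unfolding fin_sym_gen_set_def by auto
  obtain ss where "set ss \<subseteq> S" "inv\<^bsub>G\<^esub> y \<otimes>\<^bsub>G\<^esub> x = wp G ss"
    using fsg_words[OF assms(1), of "inv\<^bsub>G\<^esub> y \<otimes>\<^bsub>G\<^esub> x"] assms by auto
  moreover have "y \<otimes>\<^bsub>G\<^esub> (inv\<^bsub>G\<^esub> y \<otimes>\<^bsub>G\<^esub> x) = x" using assms by (simp add: m_assoc[symmetric])
  ultimately show ?thesis by metis
qed

lemma word_dist_witness:
  assumes "fin_sym_gen_set G S" "x \<in> carrier G" "y \<in> carrier G"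
  shows "\<exists>ss. length ss = word_dist G S x y \<and> set ss \<subseteq> S \<and> x = y \<otimes>\<^bsub>G\<^esub> wp G ss"
proof -
  obtain ss where "set ss \<subseteq> S \<and> x = y \<otimes>\<^bsub>G\<^esub> wp G ss" using fsg_words2[OF assms] by blast
  then have "\<exists>n ss. length ss = n \<and> set ss \<subseteq> S \<and> x = y \<otimes>\<^bsub>G\<^esub> wp G ss" by blast
  then show ?thesis unfolding word_dist_wp by (rule LeastI_ex)
qed

lemma word_dist_le:
  "set ss \<subseteq> S \<Longrightarrow> x = y \<otimes>\<^bsub>G\<^esub> wp G ss \<Longrightarrow> word_dist G S x y \<le> length ss"
  unfolding word_dist_wp by (rule Least_le) blast

lemma fsg_countable:
  assumes "fin_sym_gen_set G S" shows "countable (carrier G)"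
proof -
  have "carrier G \<subseteq> wp G ` lists S" using fsg_words[OF assms] by blast
  moreover have "countable (lists S)" using assms unfolding fin_sym_gen_set_def
    by (intro countable_lists countable_finite) auto
  ultimately show ?thesis by (meson countable_image countable_subset)
qed


lemma fsgI:
  assumes "group G" "finite S" "S \<subseteq> carrier G" "\<forall>s\<in>S. inv\<^bsub>G\<^esub> s \<in> S"
    "\<forall>g\<in>carrier G. \<exists>ss. set ss \<subseteq> S \<and> g = wp G ss"
  shows "fin_sym_gen_set G S"
  unfolding fin_sym_gen_set_def
proof (intro conjI assms equalityI)
  show "generate G S \<subseteq> carrier G" using group.generate_incl[OF assms(1,3)] .
  show "carrier G \<subseteq> generate G S"
  proof
    fix g assume "g \<in> carrier G"
    then obtain ss where "set ss \<subseteq> S" "g = wp G ss" using assms(5) by auto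
    then show "g \<in> generate G S" using wp_generate by metis
  qed
qed

definition prodK :: "('g,'m) monoid_scheme \<Rightarrow> nat \<Rightarrow> ('g \<times> nat) monoid" where
  "prodK G K = \<lparr>carrier = carrier G \<times> {..<K},
     mult = \<lambda>p q. (fst p \<otimes>\<^bsub>G\<^esub> fst q, (snd p + snd q) mod K), one = (\<one>\<^bsub>G\<^esub>, 0)\<rparr>"

lemma prodK_simps[simp]: "carrier (prodK G K) = carrier G \<times> {..<K}"
  "p \<otimes>\<^bsub>prodK G K\<^esub> q = (fst p \<otimes>\<^bsub>G\<^esub> fst q, (snd p + snd q) mod K)"
  "\<one>\<^bsub>prodK G K\<^esub> = (\<one>\<^bsub>G\<^esub>, 0)"
  by (simp_all add: prodK_def)

lemma mod3: "((a + b) mod K + c) mod K = (a + (b + c) mod K) mod (K::nat)"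
  by (simp add: mod_add_left_eq mod_add_right_eq add.assoc)

lemma modinv: "(i::nat) < K \<Longrightarrow> ((K - i) mod K + i) mod K = 0"
  by (simp add: mod_add_left_eq)

lemma prodK_group: assumes "group G" "K > 0" shows "group (prodK G K)"
proof -
  interpret group G by fact
  show ?thesis
  proof (rule groupI)
    fix x y z assume xyz: "x \<in> carrier (prodK G K)" "y \<in> carrier (prodK G K)" "z \<in> carrier (prodK G K)"
    obtain a i b j c l where e: "x = (a, i)" "y = (b, j)" "z = (c, l)" by (metis prod.exhaust)
    have "a \<in> carrier G" "b \<in> carrier G" "c \<in> carrier G" using xyz e by auto
    then show "x \<otimes>\<^bsub>prodK G K\<^esub> y \<otimes>\<^bsub>prodK G K\<^esub> z = x \<otimes>\<^bsub>prodK G K\<^esub> (y \<otimes>\<^bsub>prodK G K\<^esub> z)"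
      unfolding e prodK_simps fst_conv snd_conv by (simp only: m_assoc mod3)
  next
    fix x assume x: "x \<in> carrier (prodK G K)"
    obtain a i where e: "x = (a, i)" by (metis prod.exhaust)
    have ai: "a \<in> carrier G" "i < K" using x e by auto
    have "(inv\<^bsub>G\<^esub> a, (K - i) mod K) \<otimes>\<^bsub>prodK G K\<^esub> x = \<one>\<^bsub>prodK G K\<^esub>"
      unfolding e prodK_simps fst_conv snd_conv using ai by (simp only: l_inv modinv)
    moreover have "(inv\<^bsub>G\<^esub> a, (K - i) mod K) \<in> carrier (prodK G K)" using ai assms(2) by simp
    ultimately show "\<exists>y\<in>carrier (prodK G K). y \<otimes>\<^bsub>prodK G K\<^esub> x = \<one>\<^bsub>prodK G K\<^esub>" by blast
  next
    show "\<one>\<^bsub>prodK G K\<^esub> \<in> carrier (prodK G K)" using assms(2) by simp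
  next
    fix x y assume "x \<in> carrier (prodK G K)" "y \<in> carrier (prodK G K)"
    then show "x \<otimes>\<^bsub>prodK G K\<^esub> y \<in> carrier (prodK G K)" using assms(2) by auto
  next
    fix x assume "x \<in> carrier (prodK G K)"
    then show "\<one>\<^bsub>prodK G K\<^esub> \<otimes>\<^bsub>prodK G K\<^esub> x = x" by (cases x) auto
  qed
qed

lemma prodK_wp: "wp (prodK G K) ss = (wp G (map fst ss), sum_list (map snd ss) mod K)"
  by (induction ss) (auto simp: mod_add_right_eq)

lemma prodK_inv: assumes "group G" "K > 0" "g \<in> carrier G" "i < K"
  shows "inv\<^bsub>prodK G K\<^esub> (g, i) = (inv\<^bsub>G\<^esub> g, (K - i) mod K)"
proof (rule group.inv_equality[OF prodK_group[OF assms(1,2)]])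
  have "((K - i) mod K + i) mod K = 0" using assms(4) by (rule modinv)
  then show "(inv\<^bsub>G\<^esub> g, (K - i) mod K) \<otimes>\<^bsub>prodK G K\<^esub> (g, i) = \<one>\<^bsub>prodK G K\<^esub>"
    using assms by (auto intro: group.l_inv)
qed (use assms in \<open>auto intro: group.inv_closed\<close>)

definition prodS :: "('g,'m) monoid_scheme \<Rightarrow> 'g set \<Rightarrow> nat \<Rightarrow> ('g \<times> nat) set" where
  "prodS G S K = insert \<one>\<^bsub>G\<^esub> S \<times> {..<K}"

lemma prodK_fsg: assumes "fin_sym_gen_set G S" "K > 0"
  shows "fin_sym_gen_set (prodK G K) (prodS G S K)"
proof -
  have G: "group G" and S: "finite S" "S \<subseteq> carrier G" "\<forall>s\<in>S. inv\<^bsub>G\<^esub> s \<in> S"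
    using assms unfolding fin_sym_gen_set_def by auto
  interpret group G by fact
  show ?thesis
  proof (rule fsgI[OF prodK_group[OF G assms(2)]])
    show "finite (prodS G S K)" using S by (simp add: prodS_def)
    show "prodS G S K \<subseteq> carrier (prodK G K)" using S by (auto simp: prodS_def)
    show "\<forall>s\<in>prodS G S K. inv\<^bsub>prodK G K\<^esub> s \<in> prodS G S K"
    proof
      fix s assume s: "s \<in> prodS G S K"
      obtain g i where e: "s = (g, i)" by (metis prod.exhaust)
      have gi: "g \<in> insert \<one>\<^bsub>G\<^esub> S" "i < K" using s e by (auto simp: prodS_def)
      then have gc: "g \<in> carrier G" using S by auto
      have "inv\<^bsub>G\<^esub> g \<in> insert \<one>\<^bsub>G\<^esub> S" using gi S(3) by auto
      moreover have "(K - i) mod K < K" using assms(2) by simp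
      ultimately show "inv\<^bsub>prodK G K\<^esub> s \<in> prodS G S K"
        unfolding e prodK_inv[OF G assms(2) gc gi(2)] by (simp add: prodS_def)
    qed
    show "\<forall>g\<in>carrier (prodK G K). \<exists>ss. set ss \<subseteq> prodS G S K \<and> g = wp (prodK G K) ss"
    proof
      fix p assume p: "p \<in> carrier (prodK G K)"
      then obtain ss where ss: "set ss \<subseteq> S" "fst p = wp G ss" using fsg_words[OF assms(1), of "fst p"] p by auto
      have "wp G ss \<in> carrier G" using ss S by (intro wp_closed) auto
      moreover have z0: "sum_list (map snd (map (\<lambda>s. (s, 0::nat)) ss)) = 0"
        by (induction ss) auto
      moreover have "map fst (map (\<lambda>s. (s, 0::nat)) ss) = ss" by (induction ss) auto
      moreover have "snd p mod K = snd p" using p by auto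
      ultimately have "wp (prodK G K) ((\<one>\<^bsub>G\<^esub>, snd p) # map (\<lambda>s. (s, 0)) ss) = p"
        using ss(2) by (cases p) (simp add: prodK_wp z0 del: map_map)
      moreover have "set ((\<one>\<^bsub>G\<^esub>, snd p) # map (\<lambda>s. (s, 0)) ss) \<subseteq> prodS G S K"
        using p ss assms(2) by (auto simp: prodS_def)
      ultimately show "\<exists>ss. set ss \<subseteq> prodS G S K \<and> p = wp (prodK G K) ss" by metis
    qed
  qed
qed


lemma (in group) wp_filter_one:
  fixes l :: "'a list"
  shows "set l \<subseteq> carrier G \<Longrightarrow> wp G (filter (\<lambda>s. s \<noteq> \<one>\<^bsub>G\<^esub>) l) = wp G l"
  by (induction l) (auto simp: wp_closed)

lemma prodK_lower:
  assumes fsg: "fin_sym_gen_set G S" and K: "K > 0"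
    and p: "p \<in> carrier (prodK G K)" and q: "q \<in> carrier (prodK G K)"
  shows "word_dist G S (fst p) (fst q) \<le> word_dist (prodK G K) (prodS G S K) p q"
proof -
  have G: "group G" and S: "S \<subseteq> carrier G" using fsg unfolding fin_sym_gen_set_def by auto
  interpret group G by fact
  obtain ss where ss: "length ss = word_dist (prodK G K) (prodS G S K) p q"
    "set ss \<subseteq> prodS G S K" "p = q \<otimes>\<^bsub>prodK G K\<^esub> wp (prodK G K) ss"
    using word_dist_witness[OF prodK_fsg[OF fsg K] p q] by blast
  have m: "set (map fst ss) \<subseteq> insert \<one>\<^bsub>G\<^esub> S" using ss(2) by (auto simp: prodS_def)
  then have mc: "set (map fst ss) \<subseteq> carrier G" using S by auto
  have "fst p = fst q \<otimes>\<^bsub>G\<^esub> wp G (map fst ss)" using ss(3) by (simp add: prodK_wp)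
  also have "wp G (map fst ss) = wp G (filter (\<lambda>s. s \<noteq> \<one>\<^bsub>G\<^esub>) (map fst ss))"
    using wp_filter_one[OF mc] by simp
  finally have "word_dist G S (fst p) (fst q) \<le> length (filter (\<lambda>s. s \<noteq> \<one>\<^bsub>G\<^esub>) (map fst ss))"
    using m by (intro word_dist_le) auto
  also have "\<dots> \<le> length ss" using length_filter_le[of _ "map fst ss"] by simp
  finally show ?thesis using ss(1) by simp
qed

lemma sum_snd_zero: "sum_list (map snd (map (\<lambda>s. (s, 0::nat)) l)) = 0"
  by (induction l) auto

lemma prodK_upper:
  assumes fsg: "fin_sym_gen_set G S" and K: "K > 0"
    and p: "p \<in> carrier (prodK G K)" and q: "q \<in> carrier (prodK G K)"
  shows "word_dist (prodK G K) (prodS G S K) p q \<le> max (word_dist G S (fst p) (fst q)) 1"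
proof -
  have G: "group G" and S: "S \<subseteq> carrier G" using fsg unfolding fin_sym_gen_set_def by auto
  interpret group G by fact
  obtain ss where ss: "length ss = word_dist G S (fst p) (fst q)"
    "set ss \<subseteq> S" "fst p = fst q \<otimes>\<^bsub>G\<^esub> wp G ss"
    using word_dist_witness[OF fsg, of "fst p" "fst q"] p q by auto
  define ss' where "ss' = (if ss = [] then [\<one>\<^bsub>G\<^esub>] else ss)"
  have ss'1: "wp G ss' = wp G ss" "set ss' \<subseteq> insert \<one>\<^bsub>G\<^esub> S" "length ss' = max (length ss) 1" "ss' \<noteq> []"
    using ss by (auto simp: ss'_def) (cases ss; simp add: ss'_def)
  define k where "k = (snd p + K - snd q) mod K"
  define L where "L = (hd ss', k) # map (\<lambda>s. (s, 0::nat)) (tl ss')"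
  have z: "sum_list (map snd (map (\<lambda>s. (s, 0::nat)) l)) = 0" for l
    by (induction l) auto
  have "wp (prodK G K) L = (wp G ss', k)"
  proof -
    have "map fst L = ss'" using ss'1(4) by (simp add: L_def comp_def)
    moreover have "sum_list (map snd L) mod K = k"
    proof -
      have "sum_list (map snd L) = k + sum_list (map snd (map (\<lambda>s. (s, 0::nat)) (tl ss')))"
        by (simp add: L_def del: map_map)
      also have "\<dots> = k" by (simp only: sum_snd_zero add_0_right)
      finally show ?thesis by (simp add: k_def)
    qed
    ultimately show ?thesis by (simp add: prodK_wp)
  qed
  moreover have "(snd q + k) mod K = snd p" using p q
    by (auto simp: k_def mod_add_right_eq)
  ultimately have "p = q \<otimes>\<^bsub>prodK G K\<^esub> wp (prodK G K) L" using ss ss'1 by (cases p) auto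
  moreover have "set L \<subseteq> prodS G S K"
  proof -
    have "hd ss' \<in> insert \<one>\<^bsub>G\<^esub> S" using ss'1(2,4) hd_in_set by blast
    moreover have "set (tl ss') \<subseteq> insert \<one>\<^bsub>G\<^esub> S" using ss'1(2) by (meson list.set_sel(2) subset_iff ss'1(4))
    ultimately show ?thesis using K by (auto simp: L_def prodS_def k_def)
  qed
  ultimately have "word_dist (prodK G K) (prodS G S K) p q \<le> length L" by (rule word_dist_le[rotated])
  also have "length L = max (length ss) 1" using ss'1 by (simp add: L_def)
  finally show ?thesis using ss(1) by simp
qed


lemma transport:
  fixes P :: "('p, 'm) monoid_scheme"
  assumes fsg: "fin_sym_gen_set P SP" and cnt: "countable (carrier P)"
  shows "\<exists>(Q::nat monoid) h. inj_on h (carrier P) \<and> carrier Q = h ` carrier P \<and>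
     fin_sym_gen_set Q (h ` SP) \<and>
     (\<forall>x\<in>carrier P. \<forall>y\<in>carrier P. word_dist Q (h ` SP) (h x) (h y) = word_dist P SP x y) \<and>
     (\<forall>n. word_ball Q (h ` SP) n = h ` word_ball P SP n)"
proof -
  have G: "group P" and S: "finite SP" "SP \<subseteq> carrier P" "\<forall>s\<in>SP. inv\<^bsub>P\<^esub> s \<in> SP"
    using fsg unfolding fin_sym_gen_set_def by auto
  interpret P: group P by fact
  define C where "C = carrier P"
  define h where "h = to_nat_on C"
  define d where "d = inv_into C h"
  have inj: "inj_on h C" unfolding h_def C_def using cnt by auto
  have dh[simp]: "a \<in> C \<Longrightarrow> d (h a) = a" for a unfolding d_def using inj by simp
  define Q :: "nat monoid" where
    "Q = \<lparr>carrier = h ` C, mult = \<lambda>x y. h (d x \<otimes>\<^bsub>P\<^esub> d y), one = h \<one>\<^bsub>P\<^esub>\<rparr>"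
  have Qc[simp]: "carrier Q = h ` C" and Qo: "\<one>\<^bsub>Q\<^esub> = h \<one>\<^bsub>P\<^esub>" by (simp_all add: Q_def)
  have hom[simp]: "a \<in> C \<Longrightarrow> b \<in> C \<Longrightarrow> h a \<otimes>\<^bsub>Q\<^esub> h b = h (a \<otimes>\<^bsub>P\<^esub> b)" for a b
    by (simp add: Q_def)
  have CP[simp]: "C = carrier P" by (simp add: C_def)
  have Qg: "group Q"
  proof (rule groupI)
    fix x y assume "x \<in> carrier Q" "y \<in> carrier Q"
    then show "x \<otimes>\<^bsub>Q\<^esub> y \<in> carrier Q" by auto
  next
    show "\<one>\<^bsub>Q\<^esub> \<in> carrier Q" by (simp add: Qo)
  next
    fix x y z assume "x \<in> carrier Q" "y \<in> carrier Q" "z \<in> carrier Q"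
    then show "x \<otimes>\<^bsub>Q\<^esub> y \<otimes>\<^bsub>Q\<^esub> z = x \<otimes>\<^bsub>Q\<^esub> (y \<otimes>\<^bsub>Q\<^esub> z)"
      by (auto simp: P.m_assoc)
  next
    fix x assume "x \<in> carrier Q" then show "\<one>\<^bsub>Q\<^esub> \<otimes>\<^bsub>Q\<^esub> x = x" by (auto simp: Qo)
  next
    fix x assume "x \<in> carrier Q"
    then obtain a where a: "a \<in> C" "x = h a" by auto
    then have "h (inv\<^bsub>P\<^esub> a) \<otimes>\<^bsub>Q\<^esub> x = \<one>\<^bsub>Q\<^esub>" by (simp add: Qo)
    moreover have "inv\<^bsub>P\<^esub> a \<in> C" using a by simp
    then have "h (inv\<^bsub>P\<^esub> a) \<in> carrier Q" unfolding Qc by (rule imageI)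
    ultimately show "\<exists>y\<in>carrier Q. y \<otimes>\<^bsub>Q\<^esub> x = \<one>\<^bsub>Q\<^esub>" by blast
  qed
  interpret Q: group Q by (fact Qg)
  have wpQ: "set ss \<subseteq> C \<Longrightarrow> wp Q (map h ss) = h (wp P ss)" for ss
    by (induction ss) (auto simp: Qo P.wp_closed)
  have lists: "set ts \<subseteq> h ` SP \<Longrightarrow> ts = map h (map d ts) \<and> set (map d ts) \<subseteq> SP" for ts
  proof (induction ts)
    case (Cons t ts)
    then obtain s where "s \<in> SP" "t = h s" by auto
    then show ?case using Cons S(2) by auto
  qed simp
  have dist: "word_dist Q (h ` SP) (h x) (h y) = word_dist P SP x y" if x: "x \<in> C" and y: "y \<in> C" for x y
  proof -
    have "(\<exists>ts. length ts = n \<and> set ts \<subseteq> h ` SP \<and> h x = h y \<otimes>\<^bsub>Q\<^esub> wp Q ts) \<longleftrightarrow>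
          (\<exists>ss. length ss = n \<and> set ss \<subseteq> SP \<and> x = y \<otimes>\<^bsub>P\<^esub> wp P ss)" for n
    proof
      assume "\<exists>ts. length ts = n \<and> set ts \<subseteq> h ` SP \<and> h x = h y \<otimes>\<^bsub>Q\<^esub> wp Q ts"
      then obtain ts where ts: "length ts = n" "set ts \<subseteq> h ` SP" "h x = h y \<otimes>\<^bsub>Q\<^esub> wp Q ts" by blast
      define ss where "ss = map d ts"
      have ss: "ts = map h ss" "set ss \<subseteq> SP" using lists[OF ts(2)] by (auto simp: ss_def)
      then have "h x = h (y \<otimes>\<^bsub>P\<^esub> wp P ss)" using ts(3) S(2) y by (simp add: wpQ P.wp_closed)
      moreover have "y \<otimes>\<^bsub>P\<^esub> wp P ss \<in> C" using y ss(2) S(2) by (simp add: P.wp_closed)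
      ultimately have "x = y \<otimes>\<^bsub>P\<^esub> wp P ss" using inj x by (metis inj_onD)
      then show "\<exists>ss. length ss = n \<and> set ss \<subseteq> SP \<and> x = y \<otimes>\<^bsub>P\<^esub> wp P ss"
        using ss ts(1) by auto
    next
      assume "\<exists>ss. length ss = n \<and> set ss \<subseteq> SP \<and> x = y \<otimes>\<^bsub>P\<^esub> wp P ss"
      then obtain ss where ss: "length ss = n" "set ss \<subseteq> SP" "x = y \<otimes>\<^bsub>P\<^esub> wp P ss" by blast
      then have "h x = h y \<otimes>\<^bsub>Q\<^esub> wp Q (map h ss)" using S(2) y by (simp add: wpQ P.wp_closed)
      then show "\<exists>ts. length ts = n \<and> set ts \<subseteq> h ` SP \<and> h x = h y \<otimes>\<^bsub>Q\<^esub> wp Q ts"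
        using ss by (intro exI[of _ "map h ss"]) auto
    qed
    then show ?thesis unfolding word_dist_wp by simp
  qed
  have fsgQ: "fin_sym_gen_set Q (h ` SP)"
  proof (rule fsgI[OF Qg])
    show "finite (h ` SP)" using S by simp
    show "h ` SP \<subseteq> carrier Q" using S by auto
    show "\<forall>s\<in>h ` SP. inv\<^bsub>Q\<^esub> s \<in> h ` SP"
    proof
      fix t assume "t \<in> h ` SP"
      then obtain s where s: "s \<in> SP" "t = h s" by auto
      then have sc: "s \<in> carrier P" using S by auto
      have "inv\<^bsub>Q\<^esub> (h s) = h (inv\<^bsub>P\<^esub> s)"
        by (rule Q.inv_equality) (use sc in \<open>auto simp: Qo\<close>)
      then show "inv\<^bsub>Q\<^esub> t \<in> h ` SP" using s S by auto
    qed
    show "\<forall>g\<in>carrier Q. \<exists>ss. set ss \<subseteq> h ` SP \<and> g = wp Q ss"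
    proof
      fix g assume "g \<in> carrier Q"
      then obtain a where a: "a \<in> C" "g = h a" by auto
      then obtain ss where "set ss \<subseteq> SP" "a = wp P ss" using fsg_words[OF fsg] by auto
      then show "\<exists>ss. set ss \<subseteq> h ` SP \<and> g = wp Q ss"
        using a S(2) by (intro exI[of _ "map h ss"]) (auto simp: wpQ)
    qed
  qed
  have ball: "word_ball Q (h ` SP) n = h ` word_ball P SP n" for n
    unfolding word_ball_def Qc Qo using dist by force
  show ?thesis using inj fsgQ dist ball by (intro exI[of _ Q] exI[of _ h]) auto
qed


definition gball :: "'a set \<Rightarrow> ('a \<Rightarrow> 'a \<Rightarrow> bool) \<Rightarrow> 'a \<Rightarrow> nat \<Rightarrow> 'a set" where
  "gball V E x r = {y \<in> V. graph_dist V E x y \<le> r}"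

lemma gd_walk:
  assumes "conn_graph V E" "x \<in> V" "y \<in> V"
  shows "\<exists>p. is_walk E p \<and> set p \<subseteq> V \<and> hd p = x \<and> last p = y \<and> length p = Suc (graph_dist V E x y)"
proof -
  obtain p where "is_walk E p \<and> set p \<subseteq> V \<and> hd p = x \<and> last p = y"
    using assms unfolding conn_graph_def by blast
  moreover have "length p = Suc (length p - 1)" using calculation by (cases p) (auto simp: is_walk_def)
  ultimately have "\<exists>n p. is_walk E p \<and> set p \<subseteq> V \<and> hd p = x \<and> last p = y \<and> length p = Suc n" by blast
  then show ?thesis unfolding graph_dist_def by (rule LeastI_ex)
qed

lemma gd_le:
  "is_walk E p \<Longrightarrow> set p \<subseteq> V \<Longrightarrow> hd p = x \<Longrightarrow> last p = y \<Longrightarrow> length p = Suc n \<Longrightarrow> graph_dist V E x y \<le> n"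
  unfolding graph_dist_def by (rule Least_le) blast

lemma gd_refl: "x \<in> V \<Longrightarrow> graph_dist V E x x = 0"
  using gd_le[of E "[x]" V x x 0] by (simp add: is_walk_def)

lemma gd0: assumes "conn_graph V E" "x \<in> V" "y \<in> V" "graph_dist V E x y = 0" shows "y = x"
proof -
  obtain p where p: "is_walk E p" "hd p = x" "last p = y" "length p = 1"
    using gd_walk[OF assms(1-3)] assms(4) by auto
  then obtain a where "p = [a]" by (cases p) auto
  then show ?thesis using p by simp
qed

lemma gdSuc: assumes "conn_graph V E" "x \<in> V" "y \<in> V" "graph_dist V E x y = Suc n"
  shows "\<exists>z. E x z \<and> graph_dist V E z y \<le> n"
proof -
  obtain p where p: "is_walk E p" "set p \<subseteq> V" "hd p = x" "last p = y" "length p = Suc (Suc n)"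
    using gd_walk[OF assms(1-3)] assms(4) by auto
  then obtain a b rest where pe: "p = a # b # rest" by (metis length_Suc_conv)
  have "E a b" using p(1) pe unfolding is_walk_def by force
  moreover have w: "is_walk E (b # rest)" using p(1) pe unfolding is_walk_def
    by (auto simp del: nth_Cons_Suc)
  moreover have w2: "set (b # rest) \<subseteq> V" "last (b # rest) = y" "length (b # rest) = Suc n"
    using p pe by auto
  moreover have "graph_dist V E b y \<le> n" using gd_le[OF w w2(1) _ w2(2,3)] by simp
  ultimately show ?thesis using p(3) pe by auto
qed

lemma gball_bound:
  assumes cg: "conn_graph V E" and deg: "\<forall>x\<in>V. card {y. E x y} \<le> \<Delta>"
  shows "x \<in> V \<Longrightarrow> finite (gball V E x r) \<and> card (gball V E x r) \<le> (\<Delta> + 1) ^ r"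
proof (induction r arbitrary: x)
  case 0
  then have "gball V E x 0 = {x}" using gd0[OF cg] gd_refl[of x V E] unfolding gball_def by auto
  then show ?case by simp
next
  case (Suc r)
  have nbV: "E x z \<Longrightarrow> z \<in> V" for z using cg unfolding conn_graph_def by blast
  have fin: "finite {z. E x z}" using cg Suc.prems unfolding conn_graph_def by blast
  have sub: "gball V E x (Suc r) \<subseteq> insert x (\<Union>z\<in>{z. E x z}. gball V E z r)"
  proof
    fix y assume y: "y \<in> gball V E x (Suc r)"
    then have yV: "y \<in> V" and le: "graph_dist V E x y \<le> Suc r" by (auto simp: gball_def)
    show "y \<in> insert x (\<Union>z\<in>{z. E x z}. gball V E z r)"
    proof (cases "graph_dist V E x y")
      case 0 then show ?thesis using gd0[OF cg Suc.prems yV] by simp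
    next
      case (Suc n)
      then obtain z where "E x z" "graph_dist V E z y \<le> n" using gdSuc[OF cg Suc.prems yV] by blast
      then show ?thesis using le Suc yV by (auto simp: gball_def)
    qed
  qed
  have IH: "E x z \<Longrightarrow> finite (gball V E z r) \<and> card (gball V E z r) \<le> (\<Delta> + 1) ^ r" for z
    using Suc.IH nbV by blast
  have finU: "finite (insert x (\<Union>z\<in>{z. E x z}. gball V E z r))" using fin IH by auto
  have "card (gball V E x (Suc r)) \<le> card (insert x (\<Union>z\<in>{z. E x z}. gball V E z r))"
    by (rule card_mono[OF finU sub])
  also have "\<dots> \<le> Suc (card (\<Union>z\<in>{z. E x z}. gball V E z r))" by (rule card_insert_le_m1) auto
  also have "card (\<Union>z\<in>{z. E x z}. gball V E z r) \<le> (\<Sum>z\<in>{z. E x z}. card (gball V E z r))"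
    by (rule card_UN_le[OF fin])
  also have "\<dots> \<le> card {z. E x z} * (\<Delta> + 1) ^ r"
    using sum_bounded_above[of "{z. E x z}" "\<lambda>z. card (gball V E z r)" "(\<Delta> + 1) ^ r"] IH by auto
  also have "\<dots> \<le> \<Delta> * (\<Delta> + 1) ^ r" using deg Suc.prems by (intro mult_le_mono1) auto
  finally have c: "card (gball V E x (Suc r)) \<le> Suc (\<Delta> * (\<Delta> + 1) ^ r)" by simp
  have "1 \<le> (\<Delta> + 1) ^ r" by simp
  then have "Suc (\<Delta> * (\<Delta> + 1) ^ r) \<le> (\<Delta> + 1) ^ Suc r"
    by (simp only: power_Suc distrib_right mult_1_left)
  then have "card (gball V E x (Suc r)) \<le> (\<Delta> + 1) ^ Suc r" using c by linarith
  then show ?case using finite_subset[OF sub finU] by simp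
qed


lemma word_dist_refl: assumes "fin_sym_gen_set G S" "x \<in> carrier G" shows "word_dist G S x x = 0"
proof -
  have "group G" using assms unfolding fin_sym_gen_set_def by auto
  then have "x = x \<otimes>\<^bsub>G\<^esub> wp G []" using assms by (simp add: group.is_monoid monoid.r_one)
  then show ?thesis using word_dist_le[where ss="[]" and S=S and x=x and y=x and G=G] by simp
qed

lemma prodK_ball:
  assumes fsg: "fin_sym_gen_set G S" and K: "K > 0" and n: "n \<ge> 1"
  shows "word_ball (prodK G K) (prodS G S K) n = word_ball G S n \<times> {..<K}"
proof -
  have G: "group G" using fsg unfolding fin_sym_gen_set_def by auto
  have oc: "(\<one>\<^bsub>G\<^esub>, 0) \<in> carrier (prodK G K)" using K G by (simp add: group.is_monoid monoid.one_closed)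
  show ?thesis
  proof (rule Set.set_eqI)
    fix p
    show "p \<in> word_ball (prodK G K) (prodS G S K) n \<longleftrightarrow> p \<in> word_ball G S n \<times> {..<K}"
    proof (cases "p \<in> carrier (prodK G K)")
      case True
      have l: "word_dist G S \<one>\<^bsub>G\<^esub> (fst p) \<le> word_dist (prodK G K) (prodS G S K) (\<one>\<^bsub>G\<^esub>, 0) p"
        using prodK_lower[OF fsg K oc True] by simp
      have u: "word_dist (prodK G K) (prodS G S K) (\<one>\<^bsub>G\<^esub>, 0) p \<le> max (word_dist G S \<one>\<^bsub>G\<^esub> (fst p)) 1"
        using prodK_upper[OF fsg K oc True] by simp
      show ?thesis using True l u n by (cases p) (auto simp: word_ball_def)
    next
      case False then show ?thesis by (cases p) (auto simp: word_ball_def)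
    qed
  qed
qed


theorem lemma4p1:
  fixes V :: "'a set" and E :: "'a \<Rightarrow> 'a \<Rightarrow> bool"
    and G :: "('g, 'm) monoid_scheme" and S :: "'g set" and \<phi> :: "'a \<Rightarrow> 'g"
  assumes "conn_graph V E" and "bounded_geometry V E"
    and "fin_sym_gen_set G S" and "poly_growth G S"
    and "is_rough_isometry V (\<lambda>x y. real (graph_dist V E x y))
                            (carrier G) (\<lambda>x y. real (word_dist G S x y)) \<phi>"
  shows "\<exists>(G' :: nat monoid) S' (\<phi>' :: 'a \<Rightarrow> nat).
           fin_sym_gen_set G' S' \<and> poly_growth G' S' \<and>
           (\<forall>D. homogeneous_dim G' S' D \<longleftrightarrow> homogeneous_dim G S D) \<and>
           inj_on \<phi>' V \<and>
           is_rough_isometry V (\<lambda>x y. real (graph_dist V E x y))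
                             (carrier G') (\<lambda>x y. real (word_dist G' S' x y)) \<phi>'"
proof -
  note cg = assms(1) and fsg = assms(3)
  obtain a b where ri: "rough_isometry V (\<lambda>x y. real (graph_dist V E x y))
                            (carrier G) (\<lambda>x y. real (word_dist G S x y)) \<phi> a b"
    using assms(5) unfolding is_rough_isometry_def by blast
  have ab: "a \<ge> 1" "b \<ge> 0" and phiV: "\<phi> ` V \<subseteq> carrier G"
    and riL: "\<And>x y. x \<in> V \<Longrightarrow> y \<in> V \<Longrightarrow> real (graph_dist V E x y) / a - b \<le> real (word_dist G S (\<phi> x) (\<phi> y))"
    and riU: "\<And>x y. x \<in> V \<Longrightarrow> y \<in> V \<Longrightarrow> real (word_dist G S (\<phi> x) (\<phi> y)) \<le> a * real (graph_dist V E x y) + b"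
    and riS: "\<And>z. z \<in> carrier G \<Longrightarrow> \<exists>x\<in>V. real (word_dist G S z (\<phi> x)) \<le> b"
    using ri unfolding rough_isometry_def by auto
  obtain \<Delta> :: nat where deg: "\<forall>x\<in>V. card {y. E x y} \<le> \<Delta>"
    using assms(2) unfolding bounded_geometry_def by blast
  define R where "R = nat \<lfloor>a * b\<rfloor>"
  define K where "K = (\<Delta> + 1) ^ R"
  have K: "K > 0" by (simp add: K_def)
  define F where "F g = {x \<in> V. \<phi> x = g}" for g
  have Fsub: "F (\<phi> x0) \<subseteq> gball V E x0 R" if x0: "x0 \<in> V" for x0
  proof
    fix y assume "y \<in> F (\<phi> x0)"
    then have y: "y \<in> V" "\<phi> y = \<phi> x0" by (auto simp: F_def)
    have "word_dist G S (\<phi> x0) (\<phi> y) = 0" using y x0 phiV word_dist_refl[OF fsg] by auto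
    then have "real (graph_dist V E x0 y) / a \<le> b" using riL[OF x0 y(1)] by simp
    then have "real (graph_dist V E x0 y) \<le> a * b" using ab by (simp add: divide_le_eq mult.commute)
    then have "graph_dist V E x0 y \<le> R" unfolding R_def by (rule le_nat_floor)
    then show "y \<in> gball V E x0 R" using y by (simp add: gball_def)
  qed
  have Ffin: "finite (F (\<phi> x))" and Fcard: "card (F (\<phi> x)) \<le> K" if "x \<in> V" for x
  proof -
    have "finite (gball V E x R) \<and> card (gball V E x R) \<le> K"
      using gball_bound[OF cg deg that] by (simp add: K_def)
    then show "finite (F (\<phi> x))" "card (F (\<phi> x)) \<le> K"
      using Fsub[OF that] by (auto intro: finite_subset card_mono order_trans)
  qed
  define cf where "cf g = (SOME f. bij_betw f (F g) {0..<card (F g)})" for g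
  have cfb: "bij_betw (cf (\<phi> x)) (F (\<phi> x)) {0..<card (F (\<phi> x))}" if "x \<in> V" for x
    unfolding cf_def using ex_bij_betw_finite_nat[OF Ffin[OF that]] by (rule someI_ex)
  define c where "c x = cf (\<phi> x) x" for x
  have cK: "c x < K" if "x \<in> V" for x
  proof -
    have "x \<in> F (\<phi> x)" using that by (simp add: F_def)
    then have "c x < card (F (\<phi> x))" using cfb[OF that] unfolding c_def bij_betw_def by auto
    then show ?thesis using Fcard[OF that] by simp
  qed
  define P where "P = prodK G K"
  define SP where "SP = prodS G S K"
  have fsgP: "fin_sym_gen_set P SP" unfolding P_def SP_def by (rule prodK_fsg[OF fsg K])
  have cntP: "countable (carrier P)" unfolding P_def using fsg_countable[OF fsg] by simp
  obtain Q :: "nat monoid" and h where hinj: "inj_on h (carrier P)" and Qc: "carrier Q = h ` carrier P"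
    and fsgQ: "fin_sym_gen_set Q (h ` SP)"
    and dQ: "\<forall>x\<in>carrier P. \<forall>y\<in>carrier P. word_dist Q (h ` SP) (h x) (h y) = word_dist P SP x y"
    and bQ: "\<forall>n. word_ball Q (h ` SP) n = h ` word_ball P SP n"
    using transport[OF fsgP cntP] by blast
  define \<phi>' where "\<phi>' x = h (\<phi> x, c x)" for x
  have inP: "(\<phi> x, c x) \<in> carrier P" if "x \<in> V" for x using that phiV cK by (auto simp: P_def)
  have cardQ: "card (word_ball Q (h ` SP) n) = K * card (word_ball G S n)" if "n \<ge> 1" for n
  proof -
    have "word_ball P SP n \<subseteq> carrier P" by (auto simp: word_ball_def)
    then have "card (word_ball Q (h ` SP) n) = card (word_ball P SP n)"
      using bQ hinj by (simp add: card_image inj_on_subset)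
    also have "\<dots> = card (word_ball G S n) * K"
      unfolding P_def SP_def prodK_ball[OF fsg K that] by (simp add: card_cartesian_product)
    finally show ?thesis by simp
  qed
  have pgQ: "poly_growth Q (h ` SP)"
  proof -
    obtain C A :: real where CA: "C > 0" "A > 0" "\<forall>n::nat. n \<ge> 1 \<longrightarrow> real (card (word_ball G S n)) \<le> C * real n powr A"
      using assms(4) unfolding poly_growth_def by blast
    have "\<forall>n::nat. n \<ge> 1 \<longrightarrow> real (card (word_ball Q (h ` SP) n)) \<le> (K * C) * real n powr A"
    proof (intro allI impI)
      fix n :: nat assume n: "n \<ge> 1"
      have "real (card (word_ball Q (h ` SP) n)) = real K * real (card (word_ball G S n))"
        using cardQ[OF n] by simp
      also have "\<dots> \<le> real K * (C * real n powr A)" using CA(3) n K by (intro mult_left_mono) auto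
      finally show "real (card (word_ball Q (h ` SP) n)) \<le> (K * C) * real n powr A" by (simp add: mult.assoc)
    qed
    then show ?thesis unfolding poly_growth_def using CA K by (intro exI[of _ "K * C"] exI[of _ A]) auto
  qed
  have hdQ: "homogeneous_dim Q (h ` SP) D \<longleftrightarrow> homogeneous_dim G S D" for D
  proof
    assume "homogeneous_dim Q (h ` SP) D"
    then obtain C1 C2 :: real where C: "C1 > 0" "C2 > 0" "\<forall>n::nat. n \<ge> 1 \<longrightarrow>
       C1 * real n ^ D \<le> real (card (word_ball Q (h ` SP) n)) \<and> real (card (word_ball Q (h ` SP) n)) \<le> C2 * real n ^ D"
      unfolding homogeneous_dim_def by blast
    have "\<forall>n::nat. n \<ge> 1 \<longrightarrow> (C1 / K) * real n ^ D \<le> real (card (word_ball G S n)) \<and>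
                   real (card (word_ball G S n)) \<le> (C2 / K) * real n ^ D"
    proof (intro allI impI)
      fix n :: nat assume n: "n \<ge> 1"
      have e: "real (card (word_ball Q (h ` SP) n)) = real K * real (card (word_ball G S n))"
        using cardQ[OF n] by simp
      have Kp: "real K > 0" using K by simp
      show "(C1 / K) * real n ^ D \<le> real (card (word_ball G S n)) \<and>
                   real (card (word_ball G S n)) \<le> (C2 / K) * real n ^ D"
        using C(3) n e Kp by (auto simp: field_simps mult.commute)
    qed
    then show "homogeneous_dim G S D" unfolding homogeneous_dim_def using C K
      by (intro exI[of _ "C1 / K"] exI[of _ "C2 / K"]) auto
  next
    assume "homogeneous_dim G S D"
    then obtain C1 C2 :: real where C: "C1 > 0" "C2 > 0" "\<forall>n::nat. n \<ge> 1 \<longrightarrow>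
       C1 * real n ^ D \<le> real (card (word_ball G S n)) \<and> real (card (word_ball G S n)) \<le> C2 * real n ^ D"
      unfolding homogeneous_dim_def by blast
    have "\<forall>n::nat. n \<ge> 1 \<longrightarrow> (K * C1) * real n ^ D \<le> real (card (word_ball Q (h ` SP) n)) \<and>
                   real (card (word_ball Q (h ` SP) n)) \<le> (K * C2) * real n ^ D"
    proof (intro allI impI)
      fix n :: nat assume n: "n \<ge> 1"
      have e: "real (card (word_ball Q (h ` SP) n)) = real K * real (card (word_ball G S n))"
        using cardQ[OF n] by simp
      have Kp: "real K > 0" using K by simp
      show "(K * C1) * real n ^ D \<le> real (card (word_ball Q (h ` SP) n)) \<and>
                   real (card (word_ball Q (h ` SP) n)) \<le> (K * C2) * real n ^ D"
        using C(3) n e Kp by (auto simp: mult.assoc)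
    qed
    then show "homogeneous_dim Q (h ` SP) D" unfolding homogeneous_dim_def using C K
      by (intro exI[of _ "K * C1"] exI[of _ "K * C2"]) auto
  qed
  have injphi: "inj_on \<phi>' V"
  proof
    fix x y assume x: "x \<in> V" and y: "y \<in> V" and e: "\<phi>' x = \<phi>' y"
    then have "(\<phi> x, c x) = (\<phi> y, c y)" using inP hinj unfolding \<phi>'_def by (meson inj_onD)
    then have g: "\<phi> y = \<phi> x" and cc: "cf (\<phi> x) x = cf (\<phi> x) y" by (auto simp: c_def)
    have "x \<in> F (\<phi> x)" "y \<in> F (\<phi> x)" using x y g by (auto simp: F_def)
    then show "x = y" using cfb[OF x] cc unfolding bij_betw_def by (meson inj_onD)
  qed
  have dist: "real (word_dist G S (fst p) (fst q)) \<le> real (word_dist Q (h ` SP) (h p) (h q)) \<and>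
              real (word_dist Q (h ` SP) (h p) (h q)) \<le> real (word_dist G S (fst p) (fst q)) + 1"
    if p: "p \<in> carrier P" and q: "q \<in> carrier P" for p q
  proof -
    have "word_dist Q (h ` SP) (h p) (h q) = word_dist P SP p q" using dQ p q by blast
    moreover have "word_dist G S (fst p) (fst q) \<le> word_dist P SP p q"
      using prodK_lower[OF fsg K] p q unfolding P_def SP_def by blast
    moreover have "word_dist P SP p q \<le> max (word_dist G S (fst p) (fst q)) 1"
      using prodK_upper[OF fsg K] p q unfolding P_def SP_def by blast
    ultimately show ?thesis by auto
  qed
  have riQ: "rough_isometry V (\<lambda>x y. real (graph_dist V E x y))
                 (carrier Q) (\<lambda>x y. real (word_dist Q (h ` SP) x y)) \<phi>' a (b + 1)"
    unfolding rough_isometry_def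
  proof (intro conjI ballI)
    show "a \<ge> 1" "b + 1 \<ge> 0" using ab by auto
    show "\<phi>' ` V \<subseteq> carrier Q" using inP Qc unfolding \<phi>'_def by auto
  next
    fix x y assume x: "x \<in> V" and y: "y \<in> V"
    have d: "real (word_dist G S (\<phi> x) (\<phi> y)) \<le> real (word_dist Q (h ` SP) (\<phi>' x) (\<phi>' y)) \<and>
              real (word_dist Q (h ` SP) (\<phi>' x) (\<phi>' y)) \<le> real (word_dist G S (\<phi> x) (\<phi> y)) + 1"
      using dist[OF inP[OF x] inP[OF y]] unfolding \<phi>'_def by simp
    show "real (graph_dist V E x y) / a - (b + 1) \<le> real (word_dist Q (h ` SP) (\<phi>' x) (\<phi>' y))"
      using riL[OF x y] d by linarith
    show "real (word_dist Q (h ` SP) (\<phi>' x) (\<phi>' y)) \<le> a * real (graph_dist V E x y) + (b + 1)"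
      using riU[OF x y] d by linarith
  next
    fix z assume "z \<in> carrier Q"
    then obtain p where p: "p \<in> carrier P" "z = h p" using Qc by auto
    then have "fst p \<in> carrier G" by (auto simp: P_def)
    then obtain x where x: "x \<in> V" "real (word_dist G S (fst p) (\<phi> x)) \<le> b" using riS by blast
    have "real (word_dist Q (h ` SP) (h p) (h (\<phi> x, c x))) \<le> real (word_dist G S (fst p) (\<phi> x)) + 1"
      using dist[OF p(1) inP[OF x(1)]] by simp
    then show "\<exists>x\<in>V. real (word_dist Q (h ` SP) z (\<phi>' x)) \<le> b + 1"
      using x p unfolding \<phi>'_def by (intro bexI[of _ x]) auto
  qed
  show ?thesis
    using fsgQ pgQ hdQ injphi riQ unfolding is_rough_isometry_def
    by (intro exI[of _ Q] exI[of _ "h ` SP"] exI[of _ \<phi>']) blast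
qed

end
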